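(* Let $(B,+)$ be an abelian group and let $\lambda\colon(B,+)\to\operatorname{Aut}(B,+)$, $x\mapsto\lambda_x$, be a group homomorphism such that $\lambda_{\lambda_y(x)}=\lambda_x$ for all $x,y\in B$. Define a product on $B$ by $xy=x+\lambda_x(y)$ for $x,y\in B$. Then $(B,+,\cdot)$ is a left brace with $B^{(3)}=\{0\}$.
   Context: A left brace $(A,+,\cdot)$ is a set $A$ with two binary operations such that $(A,+)$ is an abelian group, $(A,\cdot)$ is a group, and $a(b+c)=ab-a+ac$ for all $a,b,c\in A$. In a left brace, $a*b=-a+ab-b$. For subsets $L,M\subseteq A$, $L*M$ is the subgroup of $(A,+)$ generated by $\{l*m\mid l\in L,m\in M\}$. Set $A^{(1)}=A$ and $A^{(r+1)}=A^{(r)}*A$ for $r\ge1$. *)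

theory Defs
  imports "HOL-Algebra.Group"
begin

text \<open>The additive group (A,+) is the ambient type with its ab_group_add structure;
  the multiplication is an arbitrary binary operation m on the whole type.\<close>

definition left_brace :: "('a::ab_group_add \<Rightarrow> 'a \<Rightarrow> 'a) \<Rightarrow> bool" where
  "left_brace m \<longleftrightarrow>
     (\<exists>e. group \<lparr>carrier = UNIV, monoid.mult = m, one = e\<rparr>) \<and>
     (\<forall>a b c. m a (b + c) = m a b - a + m a c)"

definition brace_star :: "('a::ab_group_add \<Rightarrow> 'a \<Rightarrow> 'a) \<Rightarrow> 'a \<Rightarrow> 'a \<Rightarrow> 'a" where
  "brace_star m a b = - a + m a b - b"

definition add_subgroup :: "'a::ab_group_add set \<Rightarrow> bool" where
  "add_subgroup H \<longleftrightarrow> 0 \<in> H \<and> (\<forall>x\<in>H. \<forall>y\<in>H. x + y \<in> H) \<and> (\<forall>x\<in>H. - x \<in> H)"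

definition add_subgroup_gen :: "'a::ab_group_add set \<Rightarrow> 'a set" where
  "add_subgroup_gen S = \<Inter>{H. add_subgroup H \<and> S \<subseteq> H}"

definition brace_star_set :: "('a::ab_group_add \<Rightarrow> 'a \<Rightarrow> 'a) \<Rightarrow> 'a set \<Rightarrow> 'a set \<Rightarrow> 'a set" where
  "brace_star_set m L M = add_subgroup_gen {brace_star m l x | l x. l \<in> L \<and> x \<in> M}"

text \<open>Right series A^(r), indexed from r = 1; the value at 0 is a junk value.\<close>
fun right_series :: "('a::ab_group_add \<Rightarrow> 'a \<Rightarrow> 'a) \<Rightarrow> nat \<Rightarrow> 'a set" where
  "right_series m 0 = UNIV"
| "right_series m (Suc 0) = UNIV"
| "right_series m (Suc (Suc r)) = brace_star_set m (right_series m (Suc r)) UNIV"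

end

theory Submission
  imports Defs
begin

lemma gen_least: "add_subgroup H \<Longrightarrow> S \<subseteq> H \<Longrightarrow> add_subgroup_gen S \<subseteq> H"
  unfolding add_subgroup_gen_def by blast

lemma gen_0: "(0::'a::ab_group_add) \<in> add_subgroup_gen S"
  unfolding add_subgroup_gen_def add_subgroup_def by blast

lemma rs2: "right_series m 2 = brace_star_set m UNIV UNIV"
  by (simp add: numeral_2_eq_2)

lemma rs3: "right_series m 3 = brace_star_set m (right_series m 2) UNIV"
proof -
  have "(3::nat) = Suc (Suc (Suc 0))" "(2::nat) = Suc (Suc 0)" by simp_all
  thus ?thesis by (simp only: right_series.simps(3))
qed

theorem theoremA:
  fixes lam :: "'a::ab_group_add \<Rightarrow> 'a \<Rightarrow> 'a"
  assumes aut: "\<And>x. bij (lam x) \<and> (\<forall>a b. lam x (a + b) = lam x a + lam x b)"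
    and hom: "\<And>x y. lam (x + y) = lam x \<circ> lam y"
    and inv: "\<And>x y. lam (lam y x) = lam x"
  shows "left_brace (\<lambda>x y. x + lam x y) \<and> right_series (\<lambda>x y. x + lam x y) 3 = {0}"
proof -
  define m where "m = (\<lambda>x y. x + lam x (y::'a))"
  have add: "\<And>x a b. lam x (a + b) = lam x a + lam x b" using aut by blast
  have injl: "\<And>x. inj (lam x)" using aut bij_is_inj by blast
  have l0: "\<And>y. lam 0 y = y"
  proof -
    fix y
    have "lam 0 y = lam 0 (lam 0 y)" using fun_cong[OF hom[of 0 0], of y] by (simp only: add_0 comp_apply)
    thus "lam 0 y = y" using injl[of 0] by (metis injD)
  qed
  have z: "\<And>x. lam x 0 = 0"
  proof -
    fix x
    have "lam x (0+0) = lam x 0 + lam x 0" by (rule add)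
    hence "lam x 0 = lam x 0 + lam x 0" by (simp only: add_0)
    thus "lam x 0 = 0" by (metis add_cancel_left_right)
  qed
  have neg: "\<And>x a. lam x (- a) = - lam x a"
  proof -
    fix x a
    have "lam x (- a) + lam x a = 0" using add[of x "-a" a] z by simp
    thus "lam x (- a) = - lam x a" by (simp add: eq_neg_iff_add_eq_0)
  qed
  have diff: "\<And>x a b. lam x (a - b) = lam x a - lam x b"
  proof -
    fix x a b
    have "lam x (a + - b) = lam x a + lam x (- b)" by (rule add)
    thus "lam x (a - b) = lam x a - lam x b" by (simp add: neg)
  qed
  have cancel: "\<And>x y. lam (- x) (lam x y) = y"
  proof -
    fix x y
    have "lam (- x) (lam x y) = lam (- x + x) y" using hom[of "-x" x] by simp
    thus "lam (- x) (lam x y) = y" by (simp add: l0)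
  qed
  have grp: "group \<lparr>carrier = UNIV, monoid.mult = m, one = 0\<rparr>"
  proof (rule groupI)
    fix x y z :: 'a
    show "x \<otimes>\<^bsub>\<lparr>carrier = UNIV, monoid.mult = m, one = 0\<rparr>\<^esub> y \<otimes>\<^bsub>\<lparr>carrier = UNIV, monoid.mult = m, one = 0\<rparr>\<^esub> z =
          x \<otimes>\<^bsub>\<lparr>carrier = UNIV, monoid.mult = m, one = 0\<rparr>\<^esub> (y \<otimes>\<^bsub>\<lparr>carrier = UNIV, monoid.mult = m, one = 0\<rparr>\<^esub> z)"
      by (simp add: m_def add hom inv add.assoc)
  next
    fix x :: 'a
    show "\<exists>y\<in>carrier \<lparr>carrier = UNIV, monoid.mult = m, one = 0\<rparr>.
           y \<otimes>\<^bsub>\<lparr>carrier = UNIV, monoid.mult = m, one = 0\<rparr>\<^esub> x = \<one>\<^bsub>\<lparr>carrier = UNIV, monoid.mult = m, one = 0\<rparr>\<^esub>"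
    proof (intro bexI)
      have "lam (- x) (- x) + lam (lam (- x) (- x)) x = lam (- x) (- x) + lam (- x) x"
        by (simp add: inv)
      also have "\<dots> = 0" using add[of "-x" "-x" x] z by simp
      finally have "lam (- x) (- x) + lam (lam (- x) (- x)) x = 0" .
      thus "lam (- x) (- x) \<otimes>\<^bsub>\<lparr>carrier = UNIV, monoid.mult = m, one = 0\<rparr>\<^esub> x = \<one>\<^bsub>\<lparr>carrier = UNIV, monoid.mult = m, one = 0\<rparr>\<^esub>"
        by (simp add: m_def)
    qed simp
  qed (auto simp: m_def l0 z)
  have law: "\<forall>a b c. m a (b + c) = m a b - a + m a c"
    by (simp add: m_def add algebra_simps)
  have star: "\<And>a b. brace_star m a b = lam a b - b"
    by (simp add: brace_star_def m_def)
  define K where "K = {l. lam l = id}"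
  have Ksub: "add_subgroup K"
    unfolding add_subgroup_def K_def
  proof (intro conjI ballI)
    show "0 \<in> {l. lam l = id}" using l0 by (auto simp: fun_eq_iff)
  next
    fix x y assume "x \<in> {l. lam l = id}" "y \<in> {l. lam l = id}"
    thus "x + y \<in> {l. lam l = id}" by (simp add: hom)
  next
    fix x assume a: "x \<in> {l. lam l = id}"
    have "lam (- x) = lam (- x) \<circ> lam x" using a by simp
    also have "\<dots> = id" using cancel by (auto simp: fun_eq_iff)
    finally show "- x \<in> {l. lam l = id}" by simp
  qed
  have r2: "right_series m 2 \<subseteq> K"
  proof -
    have "{brace_star m l x | l x. l \<in> (UNIV::'a set) \<and> x \<in> (UNIV::'a set)} \<subseteq> K"
    proof
      fix w assume "w \<in> {brace_star m l x | l x. l \<in> (UNIV::'a set) \<and> x \<in> (UNIV::'a set)}"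
      then obtain l x where w: "w = lam l x - x" using star by auto
      have "w = lam l x + - x" using w by simp
      hence "lam w = lam (lam l x) \<circ> lam (- x)" using hom[of "lam l x" "-x"] by (simp only:)
      also have "\<dots> = id" using inv cancel[of "-x"] by (auto simp: fun_eq_iff)
      finally show "w \<in> K" by (simp add: K_def)
    qed
    thus ?thesis using Ksub gen_least unfolding rs2 brace_star_set_def by blast
  qed
  have S0: "{brace_star m l x | l x. l \<in> right_series m 2 \<and> x \<in> (UNIV::'a set)} \<subseteq> {0}"
  proof
    fix w assume "w \<in> {brace_star m l x | l x. l \<in> right_series m 2 \<and> x \<in> (UNIV::'a set)}"
    then obtain l x where "w = brace_star m l x" "l \<in> right_series m 2" by blast
    moreover from this(2) r2 have "lam l = id" unfolding K_def by blast
    ultimately show "w \<in> {0}" using star by simp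
  qed
  have G0: "add_subgroup {0::'a}" by (simp add: add_subgroup_def)
  have "right_series m 3 \<subseteq> {0}"
    unfolding rs3 brace_star_set_def by (rule gen_least[OF G0 S0])
  moreover have "0 \<in> right_series m 3"
    unfolding rs3 brace_star_set_def by (rule gen_0)
  ultimately have "right_series m 3 = {0}" by blast
  moreover have "left_brace m" unfolding left_brace_def using grp law by blast
  ultimately show ?thesis unfolding m_def by (rule conjI[rotated])
qed

end
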